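(* For $i\in\{0,1,\dots,m\}$ let $q_i(y)=y^\top A_iy+2b_i^\top y+c_i$ with $A_i\in\mathbb{S}^{n-1}$, $b_i\in\mathbb{R}^{n-1}$, $c_i\in\mathbb{R}$. For $i\in\{1,\dots,m\}$ let $M_i=\begin{pmatrix}c_i & b_i^\top\\ b_i & A_i\end{pmatrix}$, $\mathcal{M}=\{M_1,\dots,M_m\}$, and $\mathcal{Y}=\{y\in\mathbb{R}^{n-1}:q_i(y)\ge0\ \forall i\in\{1,\dots,m\}\}$. Suppose there exists $\lambda^*\in\mathbb{R}^m_+$ such that $A_0-\sum_{i=1}^m\lambda^*_iA_i$ is positive semidefinite. If $\mathcal{S}(\mathcal{M})$ is rank-one generated, then the closed convex hull of $\mathrm{epi}=\{(y,t)\in\mathbb{R}^{n-1}\times\mathbb{R}: q_0(y)\le t,\ y\in\mathcal{Y}\}$ is $$\mathrm{clconv}(\mathrm{epi})=\mathrm{cl}\left(\left\{(y,t):\ \exists\,Y\succeq yy^\top,\ \langle A_0,Y\rangle+2\langle b_0,y\rangle+c_0\le t,\ \langle A_i,Y\rangle+2\langle b_i,y\rangle+c_i\ge0\ \forall i\in\{1,\dots,m\}\right\}\right).$$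
   Context: $\mathbb{S}^n$ denotes real symmetric $n\times n$ matrices with $\langle A,B\rangle=\mathrm{tr}(AB)$, $\mathbb{S}^n_+$ the PSD cone, $Y\succeq Z$ means $Y-Z$ is PSD, $\mathrm{cl}$ is closure and $\mathrm{clconv}$ closed convex hull. For $\mathcal{M}\subseteq\mathbb{S}^n$, $\mathcal{S}(\mathcal{M})=\{X\in\mathbb{S}^n_+:\langle M,X\rangle\ge0\ \forall M\in\mathcal{M}\}$. A closed convex cone $\mathcal{S}\subseteq\mathbb{S}^n_+$ is rank-one generated (ROG) if $\mathcal{S}=\mathrm{conv}(\mathcal{S}\cap\{xx^\top:x\in\mathbb{R}^n\})$. *)

theory Defs
  imports "HOL-Analysis.Analysis"
begin

definition sym_mat :: "real^'k^'k \<Rightarrow> bool" where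
  "sym_mat X \<longleftrightarrow> transpose X = X"

definition psd :: "real^'k^'k \<Rightarrow> bool" where
  "psd X \<longleftrightarrow> sym_mat X \<and> (\<forall>x. 0 \<le> x \<bullet> (X *v x))"

definition frob :: "real^'k^'k \<Rightarrow> real^'k^'k \<Rightarrow> real" where
  "frob A B = trace (A ** B)"

definition outer :: "real^'k \<Rightarrow> real^'k^'k" where
  "outer x = (\<chi> i j. x $ i * x $ j)"

definition S_of :: "(real^'k^'k) set \<Rightarrow> (real^'k^'k) set" where
  "S_of \<M> = {X. psd X \<and> (\<forall>M\<in>\<M>. 0 \<le> frob M X)}"

definition ROG :: "(real^'k^'k) set \<Rightarrow> bool" where
  "ROG S \<longleftrightarrow> closed S \<and> convex S \<and> cone S \<and> S \<subseteq> Collect psd \<and>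
      S = convex hull (S \<inter> range outer)"

text \<open>Homogenized matrix [[c, b^T],[b, A]], first row/column indexed by None.\<close>
definition hom_mat :: "real^'n^'n \<Rightarrow> real^'n \<Rightarrow> real \<Rightarrow> real^('n option)^('n option)" where
  "hom_mat A b c = (\<chi> i j. case (i, j) of
      (None, None) \<Rightarrow> c
    | (None, Some l) \<Rightarrow> b $ l
    | (Some k, None) \<Rightarrow> b $ k
    | (Some k, Some l) \<Rightarrow> A $ k $ l)"

definition qf :: "real^'n^'n \<Rightarrow> real^'n \<Rightarrow> real \<Rightarrow> real^'n \<Rightarrow> real" where
  "qf A b c y = y \<bullet> (A *v y) + 2 * (b \<bullet> y) + c"

end

theory Submission imports Defs begin

definition zz :: "real^('n option) \<Rightarrow> real^'n" where "zz x = (\<chi> j. x $ Some j)"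

lemma sum_option: "(\<Sum>i\<in>(UNIV::('n::finite) option set). f i) = f None + (\<Sum>j\<in>UNIV. f (Some j))"
  by (simp add: UNIV_option_conv sum.reindex)

lemma frob_expand: "frob M X = (\<Sum>i\<in>UNIV. \<Sum>j\<in>UNIV. M$i$j * X$j$i)"
  by (simp add: frob_def trace_def matrix_matrix_mult_def)

lemma quad_expand: "x \<bullet> (M *v x) = (\<Sum>i\<in>UNIV. \<Sum>j\<in>UNIV. M$i$j * x$j * x$i)"
  by (simp add: inner_vec_def matrix_vector_mult_def sum_distrib_left algebra_simps)

lemma frob_outer: "frob M (outer x) = x \<bullet> (M *v x)"
  by (simp add: frob_expand quad_expand outer_def algebra_simps)

lemma linear_frob: "linear (frob M)"
  by (rule linearI) (simp_all add: frob_expand sum.distrib sum_distrib_left algebra_simps)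

lemma quad_hom: "x \<bullet> (hom_mat A b c *v x) = c*(x$None)^2 + 2*(x$None)*(b \<bullet> zz x) + zz x \<bullet> (A *v zz x)"
  unfolding quad_expand
  by (simp add: sum_option hom_mat_def zz_def inner_vec_def matrix_vector_mult_def sum.distrib
       sum_distrib_left sum_distrib_right power2_eq_square algebra_simps)


lemma linear_frob1: "linear (\<lambda>M. frob M X)"
  by (rule linearI) (simp_all add: frob_expand sum.distrib sum_distrib_left algebra_simps)

lemma quad_add: "(x::real^'n) \<bullet> ((X + Y) *v x) = x \<bullet> (X *v x) + x \<bullet> (Y *v x)"
  unfolding quad_expand by (simp add: sum.distrib algebra_simps)

lemma quad_scale: "(x::real^'n) \<bullet> ((a *\<^sub>R X) *v x) = a * (x \<bullet> (X *v x))"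
  unfolding quad_expand by (simp add: sum_distrib_left algebra_simps)

lemma quad_diff: "(x::real^'n) \<bullet> ((X - Y) *v x) = x \<bullet> (X *v x) - x \<bullet> (Y *v x)"
  unfolding quad_expand by (simp add: sum_subtractf algebra_simps)

lemma quad_outer: "(x::real^'n) \<bullet> (outer y *v x) = (y \<bullet> x)^2"
  unfolding quad_expand by (simp add: outer_def inner_vec_def power2_eq_square sum_product algebra_simps)

lemma quad_smul: "(r *\<^sub>R (z::real^'n)) \<bullet> (A *v (r *\<^sub>R z)) = r^2 * (z \<bullet> (A *v z))"
  unfolding quad_expand by (simp add: power2_eq_square sum_distrib_left algebra_simps)

lemma sym_add: "sym_mat X \<Longrightarrow> sym_mat Y \<Longrightarrow> sym_mat (X + Y)"
  by (simp add: sym_mat_def transpose_def vec_eq_iff)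

lemma sym_scale: "sym_mat X \<Longrightarrow> sym_mat (a *\<^sub>R X)"
  by (simp add: sym_mat_def transpose_def vec_eq_iff)

lemma sym_outer: "sym_mat (outer y)"
  by (simp add: sym_mat_def transpose_def vec_eq_iff outer_def)

lemma psd_add: "psd X \<Longrightarrow> psd Y \<Longrightarrow> psd (X + Y)"
  by (simp add: psd_def sym_add quad_add add_nonneg_nonneg)

lemma psd_scale: "0 \<le> a \<Longrightarrow> psd X \<Longrightarrow> psd (a *\<^sub>R X)"
  by (simp add: psd_def sym_scale quad_scale)

lemma psd_outer: "psd (outer y)"
  by (simp add: psd_def sym_outer quad_outer)

lemma frob_hom_hom: "frob (hom_mat A b c) (hom_mat Y y 1) = c + 2 * (b \<bullet> y) + frob A Y"
  by (simp add: frob_expand sum_option hom_mat_def inner_vec_def sum.distrib algebra_simps)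


lemma frob_lin: "frob M (u *\<^sub>R X + v *\<^sub>R Y) = u * frob M X + v * frob M Y"
  unfolding frob_expand by (simp add: sum.distrib sum_distrib_left algebra_simps)

lemma R_convex:
  fixes A :: "nat \<Rightarrow> real^'n^'n" and b :: "nat \<Rightarrow> real^'n" and c :: "nat \<Rightarrow> real"
  shows "convex {(y, t). \<exists>Y. psd (Y - outer y) \<and>
                    frob (A 0) Y + 2 * (b 0 \<bullet> y) + c 0 \<le> t \<and>
                    (\<forall>i\<in>{1..m}. frob (A i) Y + 2 * (b i \<bullet> y) + c i \<ge> 0)}"
  (is "convex ?R")
proof (rule convexI)
  fix p q and u v :: real
  assume p: "p \<in> ?R" and q: "q \<in> ?R" and u: "0 \<le> u" and v: "0 \<le> v" and uv: "u + v = 1"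
  obtain y1 t1 where pe[simp]: "p = (y1,t1)" by force
  obtain y2 t2 where qe[simp]: "q = (y2,t2)" by force
  from p obtain Y1 where Y1: "psd (Y1 - outer y1)" "frob (A 0) Y1 + 2 * (b 0 \<bullet> y1) + c 0 \<le> t1"
     "\<forall>i\<in>{1..m}. frob (A i) Y1 + 2 * (b i \<bullet> y1) + c i \<ge> 0" by auto
  from q obtain Y2 where Y2: "psd (Y2 - outer y2)" "frob (A 0) Y2 + 2 * (b 0 \<bullet> y2) + c 0 \<le> t2"
     "\<forall>i\<in>{1..m}. frob (A i) Y2 + 2 * (b i \<bullet> y2) + c i \<ge> 0" by auto
  define Y where "Y = u *\<^sub>R Y1 + v *\<^sub>R Y2"
  have fY: "frob M Y = u * frob M Y1 + v * frob M Y2" for M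
    unfolding Y_def by (rule frob_lin)
  have vv: "v = 1 - u" using uv by simp
  have eq: "Y - outer (u *\<^sub>R y1 + v *\<^sub>R y2) = u *\<^sub>R (Y1 - outer y1) + v *\<^sub>R (Y2 - outer y2) + (u * v) *\<^sub>R outer (y1 - y2)"
    unfolding vec_eq_iff Y_def outer_def vv by (simp add: algebra_simps power2_eq_square)
  have ps: "psd (Y - outer (u *\<^sub>R y1 + v *\<^sub>R y2))"
    unfolding eq using Y1(1) Y2(1) u v by (intro psd_add psd_scale psd_outer) auto
  have cc: "c i = u * c i + v * c i" for i using uv by (metis distrib_right mult_1)
  have lin: "frob (A i) Y + 2 * (b i \<bullet> (u *\<^sub>R y1 + v *\<^sub>R y2)) + c i =
     u * (frob (A i) Y1 + 2 * (b i \<bullet> y1) + c i) + v * (frob (A i) Y2 + 2 * (b i \<bullet> y2) + c i)" for i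
    by (subst cc[of i]) (simp add: fY inner_add_right algebra_simps)
  have h0: "frob (A 0) Y + 2 * (b 0 \<bullet> (u *\<^sub>R y1 + v *\<^sub>R y2)) + c 0 \<le> u * t1 + v * t2"
    unfolding lin using Y1(2) Y2(2) u v by (intro add_mono mult_left_mono) auto
  have hi: "\<forall>i\<in>{1..m}. frob (A i) Y + 2 * (b i \<bullet> (u *\<^sub>R y1 + v *\<^sub>R y2)) + c i \<ge> 0"
    unfolding lin using Y1(3) Y2(3) u v by (auto intro!: add_nonneg_nonneg mult_nonneg_nonneg)
  show "u *\<^sub>R p + v *\<^sub>R q \<in> ?R"
    using ps h0 hi by auto
qed


lemma epi_sub_R:
  fixes A :: "nat \<Rightarrow> real^'n^'n" and b :: "nat \<Rightarrow> real^'n" and c :: "nat \<Rightarrow> real"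
  shows "{(y, t). qf (A 0) (b 0) (c 0) y \<le> t \<and> (\<forall>i\<in>{1..m}. 0 \<le> qf (A i) (b i) (c i) y)}
    \<subseteq> {(y, t). \<exists>Y. psd (Y - outer y) \<and>
                    frob (A 0) Y + 2 * (b 0 \<bullet> y) + c 0 \<le> t \<and>
                    (\<forall>i\<in>{1..m}. frob (A i) Y + 2 * (b i \<bullet> y) + c i \<ge> 0)}"
proof (rule subsetI)
  fix p assume p: "p \<in> {(y, t). qf (A 0) (b 0) (c 0) y \<le> t \<and> (\<forall>i\<in>{1..m}. 0 \<le> qf (A i) (b i) (c i) y)}"
  obtain y t where pe: "p = (y, t)" by force
  have h: "qf (A 0) (b 0) (c 0) y \<le> t" "\<forall>i\<in>{1..m}. 0 \<le> qf (A i) (b i) (c i) y" using p pe by auto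
  have "psd (outer y - outer y)" using psd_scale[OF _ psd_outer, of 0 y] by simp
  then show "p \<in> {(y, t). \<exists>Y. psd (Y - outer y) \<and>
                    frob (A 0) Y + 2 * (b 0 \<bullet> y) + c 0 \<le> t \<and>
                    (\<forall>i\<in>{1..m}. frob (A i) Y + 2 * (b i \<bullet> y) + c i \<ge> 0)}"
    using h pe by (auto simp: frob_outer qf_def intro!: exI[of _ "outer y"])
qed

lemma psd_W:
  fixes Y :: "real^'n^'n"
  assumes "psd (Y - outer y)"
  shows "psd (hom_mat Y y 1)"
proof -
  have "transpose (Y - outer y) = Y - outer y" using assms by (simp add: psd_def sym_mat_def)
  hence sy: "Y $ j $ i = Y $ i $ j" for i j
    by (simp add: vec_eq_iff transpose_def outer_def)
  have "sym_mat (hom_mat Y y 1)"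
    by (simp add: sym_mat_def vec_eq_iff transpose_def hom_mat_def sy split: option.splits)
  moreover have "0 \<le> x \<bullet> (hom_mat Y y 1 *v x)" for x
  proof -
    have a: "0 \<le> zz x \<bullet> ((Y - outer y) *v zz x)" using assms by (simp add: psd_def)
    have "x \<bullet> (hom_mat Y y 1 *v x) = (x $ None + y \<bullet> zz x)^2 + zz x \<bullet> ((Y - outer y) *v zz x)"
      by (simp add: quad_hom quad_diff quad_outer power2_eq_square algebra_simps)
    then show ?thesis using a by simp
  qed
  ultimately show ?thesis by (simp add: psd_def)
qed


lemma frob_sum: "frob M (\<Sum>v\<in>F. g v *\<^sub>R X v) = (\<Sum>v\<in>F. g v * frob M (X v))"
proof (induction F rule: infinite_finite_induct)
  case (infinite F) then show ?case by (simp add: frob_expand)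
next
  case empty then show ?case by (simp add: frob_expand)
next
  case (insert x F)
  then show ?case using frob_lin[of M 1 "g x *\<^sub>R X x" 1 "\<Sum>v\<in>F. g v *\<^sub>R X v"]
    frob_lin[of M "g x" "X x" 0 0] by simp
qed

lemma quad_sum: "(x::real^'n) \<bullet> ((\<Sum>i\<in>I. a i *\<^sub>R M i) *v x) = (\<Sum>i\<in>I. a i * (x \<bullet> (M i *v x)))"
proof (induction I rule: infinite_finite_induct)
  case (infinite F) then show ?case by (simp add: quad_expand)
next
  case empty then show ?case by (simp add: quad_expand)
next
  case (insert j F)
  then show ?case by (simp add: quad_add quad_scale)
qed

lemma outer_nth: "outer x $ p $ q = x $ p * x $ q"
  by (simp add: outer_def)

lemma R_sub:
  fixes A :: "nat \<Rightarrow> real^'n^'n" and b :: "nat \<Rightarrow> real^'n" and c :: "nat \<Rightarrow> real"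
    and m :: nat
  assumes lam: "\<exists>lam::nat \<Rightarrow> real. (\<forall>i\<in>{1..m}. 0 \<le> lam i) \<and>
                 psd (A 0 - (\<Sum>i=1..m. lam i *\<^sub>R A i))"
    and rog: "ROG (S_of {hom_mat (A i) (b i) (c i) | i. i \<in> {1..m}})"
    and Yh: "psd (Y - outer y)" "frob (A 0) Y + 2 * (b 0 \<bullet> y) + c 0 \<le> t"
       "\<forall>i\<in>{1..m}. frob (A i) Y + 2 * (b i \<bullet> y) + c i \<ge> 0"
  shows "(y, t) \<in> convex hull {(y, t). qf (A 0) (b 0) (c 0) y \<le> t \<and>
                                      (\<forall>i\<in>{1..m}. 0 \<le> qf (A i) (b i) (c i) y)}"
proof -
  obtain lm where lm: "\<forall>i\<in>{1..m}. 0 \<le> lm i" "psd (A 0 - (\<Sum>i=1..m. lm i *\<^sub>R A i))"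
    using lam by blast
  let ?S = "S_of {hom_mat (A i) (b i) (c i) | i. i \<in> {1..m}}"
  define W where "W = hom_mat Y y 1"
  have WS: "W \<in> ?S" unfolding S_of_def W_def
  proof (intro CollectI conjI ballI)
    show "psd (hom_mat Y y 1)" using psd_W[OF Yh(1)] .
    fix M assume "M \<in> {hom_mat (A i) (b i) (c i) | i. i \<in> {1..m}}"
    then obtain i where i: "i \<in> {1..m}" "M = hom_mat (A i) (b i) (c i)" by blast
    have "0 \<le> frob (A i) Y + 2 * (b i \<bullet> y) + c i" using Yh(3) i(1) by blast
    then show "0 \<le> frob M (hom_mat Y y 1)" unfolding i(2) frob_hom_hom by linarith
  qed
  have "?S = convex hull (?S \<inter> range outer)" using rog by (simp add: ROG_def)
  with WS have "W \<in> convex hull (?S \<inter> range outer)" by simp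
  then obtain F \<theta> where F: "finite F" "F \<subseteq> ?S \<inter> range outer" "\<forall>x\<in>F. 0 \<le> \<theta> x" "sum \<theta> F = 1"
    "(\<Sum>v\<in>F. \<theta> v *\<^sub>R v) = W"
    unfolding convex_hull_explicit by blast
  define xv where "xv (v::real^('n option)^('n option)) = (SOME x. v = outer x)" for v
  have xv: "v = outer (xv v)" if "v \<in> F" for v
  proof -
    have "\<exists>x. v = outer x" using F(2) that by blast
    then show ?thesis unfolding xv_def by (rule someI_ex)
  qed
  define al where "al v = xv v $ None" for v
  define zv where "zv v = zz (xv v)" for v
  define Q where "Q i v = c i * (al v)^2 + 2 * al v * (b i \<bullet> zv v) + zv v \<bullet> (A i *v zv v)" for i v
  have Wc: "W $ p $ q = (\<Sum>v\<in>F. \<theta> v * (xv v $ p * xv v $ q))" for p q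
  proof -
    have "W $ p $ q = (\<Sum>v\<in>F. \<theta> v * (v $ p $ q))" using F(5)[symmetric] by simp
    also have "\<dots> = (\<Sum>v\<in>F. \<theta> v * (xv v $ p * xv v $ q))"
    proof (rule sum.cong)
      fix v assume "v \<in> F"
      then have "v $ p $ q = xv v $ p * xv v $ q" using xv by (metis outer_nth)
      then show "\<theta> v * (v $ p $ q) = \<theta> v * (xv v $ p * xv v $ q)" by simp
    qed simp
    finally show ?thesis .
  qed
  have e1: "(\<Sum>v\<in>F. \<theta> v * (al v)^2) = 1"
    using Wc[of None None] by (simp add: W_def hom_mat_def al_def power2_eq_square)
  have e2: "y = (\<Sum>v\<in>F. (\<theta> v * al v) *\<^sub>R zv v)"
  proof (subst vec_eq_iff, intro allI)
    fix j
    show "y $ j = (\<Sum>v\<in>F. (\<theta> v * al v) *\<^sub>R zv v) $ j"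
      using Wc[of None "Some j"] by (simp add: W_def hom_mat_def al_def zv_def zz_def mult.assoc)
  qed
  have e3: "Y = (\<Sum>v\<in>F. \<theta> v *\<^sub>R outer (zv v))"
  proof (subst vec_eq_iff, intro allI, subst vec_eq_iff, intro allI)
    fix i j
    show "Y $ i $ j = (\<Sum>v\<in>F. \<theta> v *\<^sub>R outer (zv v)) $ i $ j"
      using Wc[of "Some i" "Some j"] by (simp add: W_def hom_mat_def zv_def zz_def outer_def)
  qed
  have Qnn: "0 \<le> Q i v" if "v \<in> F" "i \<in> {1..m}" for i v
  proof -
    have "hom_mat (A i) (b i) (c i) \<in> {hom_mat (A i) (b i) (c i) | i. i \<in> {1..m}}" using that(2) by blast
    moreover have "v \<in> ?S" using F(2) that(1) by blast
    ultimately have "0 \<le> frob (hom_mat (A i) (b i) (c i)) v" unfolding S_of_def by blast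
    moreover have "frob (hom_mat (A i) (b i) (c i)) v = frob (hom_mat (A i) (b i) (c i)) (outer (xv v))"
      by (rule arg_cong[OF xv[OF that(1)]])
    moreover have "frob (hom_mat (A i) (b i) (c i)) (outer (xv v)) = Q i v"
      by (simp add: frob_outer quad_hom Q_def al_def zv_def)
    ultimately show ?thesis by simp
  qed
  have T0: "frob (A 0) Y + 2 * (b 0 \<bullet> y) + c 0 = (\<Sum>v\<in>F. \<theta> v * Q 0 v)"
  proof -
    have f: "frob (A 0) Y = (\<Sum>v\<in>F. \<theta> v * (zv v \<bullet> (A 0 *v zv v)))"
      unfolding e3 frob_sum frob_outer ..
    have g: "b 0 \<bullet> y = (\<Sum>v\<in>F. \<theta> v * al v * (b 0 \<bullet> zv v))"
      by (subst e2) (simp add: inner_sum_right)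
    have h: "c 0 = (\<Sum>v\<in>F. \<theta> v * (al v)^2 * c 0)"
      using e1 by (simp add: sum_distrib_right[symmetric])
    have q1: "(\<Sum>v\<in>F. \<theta> v * Q 0 v) = (\<Sum>v\<in>F. \<theta> v * (al v)^2 * c 0
        + 2 * (\<theta> v * al v * (b 0 \<bullet> zv v)) + \<theta> v * (zv v \<bullet> (A 0 *v zv v)))"
      by (rule sum.cong) (simp_all add: Q_def algebra_simps)
    have q: "(\<Sum>v\<in>F. \<theta> v * Q 0 v) = (\<Sum>v\<in>F. \<theta> v * (al v)^2 * c 0)
        + 2 * (\<Sum>v\<in>F. \<theta> v * al v * (b 0 \<bullet> zv v)) + (\<Sum>v\<in>F. \<theta> v * (zv v \<bullet> (A 0 *v zv v)))"
      unfolding q1 by (simp add: sum.distrib sum_distrib_left)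
    show ?thesis using f g h q by linarith
  qed
  define F1 where "F1 = {v\<in>F. al v \<noteq> 0}"
  have F1F: "F1 \<subseteq> F" and fF1: "finite F1" using F(1) by (auto simp: F1_def)
  have nn0: "0 \<le> Q 0 v" if "v \<in> F" "al v = 0" for v
  proof -
    have "0 \<le> zv v \<bullet> ((A 0 - (\<Sum>i=1..m. lm i *\<^sub>R A i)) *v zv v)" using lm(2) by (simp add: psd_def)
    also have "\<dots> = zv v \<bullet> (A 0 *v zv v) - (\<Sum>i=1..m. lm i * (zv v \<bullet> (A i *v zv v)))"
      by (simp add: quad_diff quad_sum)
    finally have a: "(\<Sum>i=1..m. lm i * (zv v \<bullet> (A i *v zv v))) \<le> zv v \<bullet> (A 0 *v zv v)" by simp
    have "0 \<le> (\<Sum>i=1..m. lm i * (zv v \<bullet> (A i *v zv v)))"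
    proof (rule sum_nonneg)
      fix i assume i: "i \<in> {1..m}"
      have "0 \<le> Q i v" using Qnn[OF that(1) i] .
      then have "0 \<le> zv v \<bullet> (A i *v zv v)" using that(2) by (simp add: Q_def)
      then show "0 \<le> lm i * (zv v \<bullet> (A i *v zv v))" using lm(1) i by simp
    qed
    then show ?thesis using a that(2) by (simp add: Q_def)
  qed
  have s1: "(\<Sum>v\<in>F1. \<theta> v * Q 0 v) \<le> (\<Sum>v\<in>F. \<theta> v * Q 0 v)"
    by (rule sum_mono2[OF F(1) F1F]) (use F(3) nn0 in \<open>auto simp: F1_def\<close>)
  define w where "w v = \<theta> v * (al v)^2" for v
  define yv where "yv v = (1 / al v) *\<^sub>R zv v" for v
  have Qq: "Q i v = (al v)^2 * qf (A i) (b i) (c i) (yv v)" if "al v \<noteq> 0" for i v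
  proof -
    have a: "yv v \<bullet> (A i *v yv v) = (1 / al v)^2 * (zv v \<bullet> (A i *v zv v))"
      unfolding yv_def by (rule quad_smul)
    have b: "b i \<bullet> yv v = (1 / al v) * (b i \<bullet> zv v)" by (simp add: yv_def)
    show ?thesis unfolding qf_def a b Q_def using that by (simp add: field_simps power2_eq_square)
  qed
  have w1: "sum w F1 = 1"
    using e1 sum.mono_neutral_left[OF F(1) F1F, of w] by (simp add: w_def F1_def)
  have wy: "(\<Sum>v\<in>F1. w v *\<^sub>R yv v) = y"
  proof -
    have "(\<Sum>v\<in>F1. w v *\<^sub>R yv v) = (\<Sum>v\<in>F1. (\<theta> v * al v) *\<^sub>R zv v)"
      by (rule sum.cong) (auto simp: F1_def w_def yv_def power2_eq_square)
    also have "\<dots> = (\<Sum>v\<in>F. (\<theta> v * al v) *\<^sub>R zv v)"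
      by (rule sum.mono_neutral_left[OF F(1) F1F]) (auto simp: F1_def)
    finally show ?thesis using e2 by simp
  qed
  have wt: "(\<Sum>v\<in>F1. w v * qf (A 0) (b 0) (c 0) (yv v)) \<le> t"
  proof -
    have "(\<Sum>v\<in>F1. w v * qf (A 0) (b 0) (c 0) (yv v)) = (\<Sum>v\<in>F1. \<theta> v * Q 0 v)"
      by (rule sum.cong) (auto simp: F1_def w_def Qq)
    then show ?thesis using s1 T0 Yh(2) by linarith
  qed
  define d where "d = t - (\<Sum>v\<in>F1. w v * qf (A 0) (b 0) (c 0) (yv v))"
  have d0: "0 \<le> d" using wt by (simp add: d_def)
  let ?E = "{(y, t). qf (A 0) (b 0) (c 0) y \<le> t \<and> (\<forall>i\<in>{1..m}. 0 \<le> qf (A i) (b i) (c i) y)}"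
  have "(\<Sum>v\<in>F1. w v *\<^sub>R (yv v, qf (A 0) (b 0) (c 0) (yv v) + d)) \<in> convex hull ?E"
  proof (rule convex_sum[OF fF1 convex_convex_hull w1])
    fix v assume v: "v \<in> F1"
    then show "0 \<le> w v" using F(3) by (auto simp: w_def F1_def)
    have "\<forall>i\<in>{1..m}. 0 \<le> qf (A i) (b i) (c i) (yv v)"
    proof
      fix i assume i: "i \<in> {1..m}"
      have a: "al v \<noteq> 0" "v \<in> F" using v by (auto simp: F1_def)
      have "0 \<le> (al v)^2 * qf (A i) (b i) (c i) (yv v)" using Qnn[OF a(2) i] Qq[OF a(1)] by simp
      moreover have "0 < (al v)^2" using a(1) by simp
      ultimately show "0 \<le> qf (A i) (b i) (c i) (yv v)" by (simp add: zero_le_mult_iff)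
    qed
    then show "(yv v, qf (A 0) (b 0) (c 0) (yv v) + d) \<in> convex hull ?E"
      using d0 by (intro hull_inc) auto
  qed
  moreover have "(\<Sum>v\<in>F1. w v *\<^sub>R (yv v, qf (A 0) (b 0) (c 0) (yv v) + d)) = (y, t)"
  proof (rule prod_eqI)
    show "fst (\<Sum>v\<in>F1. w v *\<^sub>R (yv v, qf (A 0) (b 0) (c 0) (yv v) + d)) = fst (y, t)"
      using wy by (simp add: fst_sum)
    have "snd (\<Sum>v\<in>F1. w v *\<^sub>R (yv v, qf (A 0) (b 0) (c 0) (yv v) + d))
        = (\<Sum>v\<in>F1. w v * qf (A 0) (b 0) (c 0) (yv v)) + (\<Sum>v\<in>F1. w v) * d"
      by (simp add: snd_sum distrib_left sum.distrib sum_distrib_right)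
    then show "snd (\<Sum>v\<in>F1. w v *\<^sub>R (yv v, qf (A 0) (b 0) (c 0) (yv v) + d)) = snd (y, t)"
      using w1 by (simp add: d_def)
  qed
  ultimately show ?thesis by simp
qed

theorem corollary5p11:
  fixes A :: "nat \<Rightarrow> real^'n^'n" and b :: "nat \<Rightarrow> real^'n" and c :: "nat \<Rightarrow> real"
    and m :: nat
  assumes symA: "\<And>i. i \<le> m \<Longrightarrow> sym_mat (A i)"
    and lam: "\<exists>lam::nat \<Rightarrow> real. (\<forall>i\<in>{1..m}. 0 \<le> lam i) \<and>
                 psd (A 0 - (\<Sum>i=1..m. lam i *\<^sub>R A i))"
    and rog: "ROG (S_of {hom_mat (A i) (b i) (c i) | i. i \<in> {1..m}})"
  shows "closure (convex hull {(y, t). qf (A 0) (b 0) (c 0) y \<le> t \<and>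
                                      (\<forall>i\<in>{1..m}. 0 \<le> qf (A i) (b i) (c i) y)})
       = closure {(y, t). \<exists>Y. psd (Y - outer y) \<and>
                    frob (A 0) Y + 2 * (b 0 \<bullet> y) + c 0 \<le> t \<and>
                    (\<forall>i\<in>{1..m}. frob (A i) Y + 2 * (b i \<bullet> y) + c i \<ge> 0)}"
proof -
  let ?E = "{(y, t). qf (A 0) (b 0) (c 0) y \<le> t \<and> (\<forall>i\<in>{1..m}. 0 \<le> qf (A i) (b i) (c i) y)}"
  let ?R = "{(y, t). \<exists>Y. psd (Y - outer y) \<and>
                    frob (A 0) Y + 2 * (b 0 \<bullet> y) + c 0 \<le> t \<and>
                    (\<forall>i\<in>{1..m}. frob (A i) Y + 2 * (b i \<bullet> y) + c i \<ge> 0)}"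
  have "convex hull ?E \<subseteq> ?R"
    by (rule hull_minimal[where S=convex, OF epi_sub_R[of A b c m] R_convex[of A b c m]])
  moreover have "?R \<subseteq> convex hull ?E"
  proof
    fix p assume "p \<in> ?R"
    then obtain y t Y where "p = (y, t)" "psd (Y - outer y)" "frob (A 0) Y + 2 * (b 0 \<bullet> y) + c 0 \<le> t"
       "\<forall>i\<in>{1..m}. frob (A i) Y + 2 * (b i \<bullet> y) + c i \<ge> 0" by auto
    then show "p \<in> convex hull ?E" using R_sub[OF lam rog] by blast
  qed
  ultimately show ?thesis by (simp add: subset_antisym)
qed

end
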